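(* For any rational number $t$ with $1/2 < t \le 1$, there exist no minimally $t$-tough chordal graphs.
   Context: All graphs are finite, simple and undirected. A graph is chordal if it contains no induced cycle of length at least $4$. $\omega(H)$ denotes the number of components of $H$. A cutset of $G$ is a vertex set $S$ with $G-S$ disconnected. For positive real $t$, $G$ is $t$-tough if $\omega(G-S)\le |S|/t$ for every cutset $S$; the toughness $\tau(G)$ is the largest such $t$, with $\tau(K_n)=\infty$ for all $n\ge1$. $G$ is minimally $t$-tough if $\tau(G)=t$ and $\tau(G-e)<t$ for every edge $e$ of $G$. *)

theory Defs
  imports Complex_Main "HOL-Library.Extended_Real"
begin

definition simple_graph :: "'a set \<Rightarrow> 'a set set \<Rightarrow> bool" where
  "simple_graph V E \<longleftrightarrow> finite V \<and>
     (\<forall>e\<in>E. \<exists>u v. e = {u, v} \<and> u \<noteq> v \<and> u \<in> V \<and> v \<in> V)"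

definition induced_edges :: "'a set set \<Rightarrow> 'a set \<Rightarrow> 'a set set" where
  "induced_edges E W = {e \<in> E. e \<subseteq> W}"

definition components :: "'a set \<Rightarrow> 'a set set \<Rightarrow> 'a set set" where
  "components V E = V // {(u, v). u \<in> V \<and> v \<in> V \<and>
      (\<lambda>x y. x \<in> V \<and> y \<in> V \<and> {x, y} \<in> E)\<^sup>*\<^sup>* u v}"

definition num_components :: "'a set \<Rightarrow> 'a set set \<Rightarrow> nat" where
  "num_components V E = card (components V E)"

definition cutset :: "'a set \<Rightarrow> 'a set set \<Rightarrow> 'a set \<Rightarrow> bool" where
  "cutset V E S \<longleftrightarrow> S \<subseteq> V \<and>
     num_components (V - S) (induced_edges E (V - S)) \<ge> 2"

text \<open>G is t-tough: omega(G - S) \<le> |S| / t for every cutset S (t > 0), written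
  multiplicatively.\<close>
definition tough :: "'a set \<Rightarrow> 'a set set \<Rightarrow> real \<Rightarrow> bool" where
  "tough V E t \<longleftrightarrow> (\<forall>S. cutset V E S \<longrightarrow>
      t * real (num_components (V - S) (induced_edges E (V - S))) \<le> real (card S))"

text \<open>Toughness: the largest t such that G is t-tough (\<infinity> if there is no cutset,
  e.g. for complete graphs; 0 for disconnected graphs).\<close>
definition toughness :: "'a set \<Rightarrow> 'a set set \<Rightarrow> ereal" where
  "toughness V E = Sup {ereal t | t. t \<ge> 0 \<and> tough V E t}"

definition minimally_tough :: "'a set \<Rightarrow> 'a set set \<Rightarrow> real \<Rightarrow> bool" where
  "minimally_tough V E t \<longleftrightarrow> toughness V E = ereal t \<and>
     (\<forall>e\<in>E. toughness V (E - {e}) < ereal t)"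

definition chordal :: "'a set \<Rightarrow> 'a set set \<Rightarrow> bool" where
  "chordal V E \<longleftrightarrow> \<not> (\<exists>cs. length cs \<ge> 4 \<and> distinct cs \<and> set cs \<subseteq> V \<and>
     (\<forall>i < length cs. \<forall>j < length cs.
        ({cs ! i, cs ! j} \<in> E \<longleftrightarrow>
          (j = Suc i mod length cs \<or> i = Suc j mod length cs))))"

end

theory Submission
  imports Defs
begin

definition estep :: "'a set set \<Rightarrow> 'a set \<Rightarrow> 'a \<Rightarrow> 'a \<Rightarrow> bool" where
  "estep E W x y \<longleftrightarrow> x \<in> W \<and> y \<in> W \<and> {x, y} \<in> E"

definition reach :: "'a set set \<Rightarrow> 'a set \<Rightarrow> 'a \<Rightarrow> 'a \<Rightarrow> bool" where
  "reach E W = (estep E W)\<^sup>*\<^sup>*"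

definition rel :: "'a set set \<Rightarrow> 'a set \<Rightarrow> ('a \<times> 'a) set" where
  "rel E W = {(u, v). u \<in> W \<and> v \<in> W \<and> reach E W u v}"

definition omega :: "'a set set \<Rightarrow> 'a set \<Rightarrow> nat" where
  "omega E W = num_components W (induced_edges E W)"

lemma reach_induced: "reach (induced_edges E W) W = reach E W"
proof -
  have "estep (induced_edges E W) W = estep E W"
    by (auto simp: induced_edges_def fun_eq_iff estep_def)
  then show ?thesis by (simp add: reach_def)
qed

lemma omega_alt: "omega E W = card (W // rel E W)"
proof -
  have "(\<lambda>x y. x \<in> W \<and> y \<in> W \<and> {x, y} \<in> induced_edges E W) = estep (induced_edges E W) W"
    by (simp add: fun_eq_iff estep_def)
  then have "components W (induced_edges E W) = W // rel E W"
    unfolding components_def rel_def using reach_induced[of E W]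
    by (simp add: reach_def)
  then show ?thesis by (simp add: omega_def num_components_def)
qed

lemma reach_step: "reach E W x y \<Longrightarrow> y \<in> W \<Longrightarrow> z \<in> W \<Longrightarrow> {y, z} \<in> E \<Longrightarrow> reach E W x z"
  unfolding reach_def by (erule rtranclp.rtrancl_into_rtrancl) (simp add: estep_def)

lemma reach_refl: "reach E W x x"
  by (simp add: reach_def)

lemma reach_edge: "x \<in> W \<Longrightarrow> y \<in> W \<Longrightarrow> {x, y} \<in> E \<Longrightarrow> reach E W x y"
  by (rule reach_step[OF reach_refl])

lemma reach_trans: "reach E W x y \<Longrightarrow> reach E W y z \<Longrightarrow> reach E W x z"
  unfolding reach_def by (rule rtranclp_trans)

lemma reach_sym: "reach E W x y \<Longrightarrow> reach E W y x"
  unfolding reach_def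
proof (induction rule: rtranclp_induct)
  case base then show ?case by simp
next
  case (step y z)
  then have "estep E W z y" by (simp add: insert_commute estep_def)
  then show ?case by (rule converse_rtranclp_into_rtranclp[OF _ step(3)])
qed

lemma reach_in: "reach E W x y \<Longrightarrow> y = x \<or> y \<in> W"
  unfolding reach_def by (induction rule: rtranclp_induct) (auto simp: estep_def)

lemma reach_closed:
  assumes "reach E W x y" "x \<in> X"
    and "\<And>p q. p \<in> X \<Longrightarrow> q \<in> W \<Longrightarrow> {p, q} \<in> E \<Longrightarrow> q \<in> X"
  shows "y \<in> X"
  using assms(1) unfolding reach_def
  by (induction rule: rtranclp_induct) (use assms in \<open>auto simp: estep_def\<close>)

lemma reach_restrict:
  assumes "reach E W x y" "x \<in> X" "X \<subseteq> W"
    and "\<And>p q. p \<in> X \<Longrightarrow> q \<in> W \<Longrightarrow> {p, q} \<in> E \<Longrightarrow> q \<in> X"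
  shows "reach E X x y"
  using assms(1) unfolding reach_def
proof (induction rule: rtranclp_induct)
  case base then show ?case by simp
next
  case (step y z)
  have "y \<in> X" using reach_closed[OF step(1)[folded reach_def] assms(2) assms(4)] .
  then have "z \<in> X" using assms(4) step(2) by (auto simp: estep_def)
  then have "estep E X y z" using \<open>y \<in> X\<close> step(2) by (simp add: estep_def)
  with step.IH show ?case by (rule rtranclp.rtrancl_into_rtrancl)
qed

lemma reach_mono: assumes "reach E W x y" "W \<subseteq> W'" "E \<subseteq> E'" shows "reach E' W' x y"
  using assms(1) unfolding reach_def
proof (induction rule: rtranclp_induct)
  case base then show ?case by simp
next
  case (step y z)
  then have "estep E' W' y z" using assms(2,3) by (auto simp: estep_def)
  with step.IH show ?case by (rule rtranclp.rtrancl_into_rtrancl)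
qed

lemma reach_first_step:
  assumes "reach E W x y" "x \<noteq> y"
  shows "\<exists>z \<in> W. x \<in> W \<and> {x, z} \<in> E"
  using assms unfolding reach_def
  by (induction rule: converse_rtranclp_induct) (auto simp: estep_def)

lemma class_eq: "x \<in> W \<Longrightarrow> rel E W `` {x} = {y. reach E W x y}"
  unfolding rel_def using reach_in by fastforce

lemma class_in: "x \<in> W \<Longrightarrow> {y. reach E W x y} \<in> W // rel E W"
  using class_eq[of x W E] quotientI[of x W "rel E W"] by simp

lemma classes_finite: "finite W \<Longrightarrow> finite (W // rel E W)"
  by (rule finite_quotient) (auto simp: rel_def)

lemma omega_ge2:
  assumes "finite W" "x \<in> W" "y \<in> W" "\<not> reach E W x y"
  shows "omega E W \<ge> 2"
proof -
  have "{{z. reach E W x z}, {z. reach E W y z}} \<subseteq> W // rel E W"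
    using class_in[OF assms(2)] class_in[OF assms(3)] by simp
  moreover have "{z. reach E W x z} \<noteq> {z. reach E W y z}"
    using assms(4) reach_refl[of E W y] by (metis mem_Collect_eq)
  ultimately have "card {{z. reach E W x z}, {z. reach E W y z}} \<le> card (W // rel E W)"
    by (intro card_mono classes_finite assms(1))
  then show ?thesis using \<open>{z. reach E W x z} \<noteq> _\<close> by (simp add: omega_alt)
qed

lemma omega_ge3:
  assumes "finite W" "x \<in> W" "y \<in> W" "z \<in> W" "\<not> reach E W x y" "\<not> reach E W x z" "\<not> reach E W y z"
  shows "omega E W \<ge> 3"
proof -
  define A where "A = {r. reach E W x r}"
  define B where "B = {r. reach E W y r}"
  define C where "C = {r. reach E W z r}"
  have sub: "{A, B, C} \<subseteq> W // rel E W"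
    using class_in[OF assms(2)] class_in[OF assms(3)] class_in[OF assms(4)] by (simp add: A_def B_def C_def)
  have m: "y \<in> B" "z \<in> C" "y \<notin> A" "z \<notin> A" "z \<notin> B"
    using assms(5-7) by (simp_all add: reach_refl A_def B_def C_def)
  have n1: "A \<noteq> B" using m(1,3) by blast
  have n2: "A \<noteq> C" using m(2,4) by blast
  have n3: "B \<noteq> C" using m(2,5) by blast
  have "card {A, B, C} \<le> card (W // rel E W)"
    using sub by (intro card_mono classes_finite assms(1))
  moreover have "card {A, B, C} = 3" using n1 n2 n3 by simp
  ultimately show ?thesis by (simp add: omega_alt)
qed

lemma omega_clique:
  assumes "\<And>x y. x \<in> W \<Longrightarrow> y \<in> W \<Longrightarrow> x \<noteq> y \<Longrightarrow> {x, y} \<in> E"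
  shows "omega E W \<le> 1"
proof -
  have "W // rel E W \<subseteq> {W}"
  proof
    fix C assume "C \<in> W // rel E W"
    then obtain x where x: "x \<in> W" "C = rel E W `` {x}" by (rule quotientE)
    have "C = W"
    proof
      show "C \<subseteq> W" using x unfolding rel_def by blast
      show "W \<subseteq> C"
      proof
        fix y assume "y \<in> W"
        have "reach E W x y"
        proof (cases "x = y")
          case True then show ?thesis by (simp add: reach_refl)
        next
          case False then show ?thesis using x(1) \<open>y \<in> W\<close> assms[of x y] by (simp add: reach_edge)
        qed
        then show "y \<in> C" using x \<open>y \<in> W\<close> unfolding rel_def by simp
      qed
    qed
    then show "C \<in> {W}" by simp
  qed
  then have "card (W // rel E W) \<le> card {W}" by (rule card_mono[rotated]) simp
  then show ?thesis by (simp add: omega_alt)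
qed

lemma omega_cong: assumes "reach E1 W = reach E2 W" shows "omega E1 W = omega E2 W"
proof -
  have "rel E1 W = rel E2 W" unfolding rel_def using assms by simp
  then show ?thesis by (simp add: omega_alt)
qed

definition ed :: "'a set set \<Rightarrow> 'a \<Rightarrow> 'a \<Rightarrow> bool" where
  "ed E x y \<longleftrightarrow> {x, y} \<in> E"

lemma succ_take: "successively R P \<Longrightarrow> successively R (take n P)"
  using successively_append_iff[of R "take n P" "drop n P"] by simp

lemma succ_drop: "successively R P \<Longrightarrow> successively R (drop n P)"
  using successively_append_iff[of R "take n P" "drop n P"] by simp

lemma reach_walk:
  assumes "reach E X x z" "x \<in> X"
  shows "\<exists>P. P \<noteq> [] \<and> hd P = x \<and> last P = z \<and> set P \<subseteq> X \<and> successively (ed E) P"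
  using assms(1) unfolding reach_def
proof (induction rule: rtranclp_induct)
  case base
  show ?case using assms(2) by (intro exI[of _ "[x]"]) simp
next
  case (step y z)
  then obtain P where P: "P \<noteq> []" "hd P = x" "last P = y" "set P \<subseteq> X" "successively (ed E) P"
    by blast
  have e: "y \<in> X" "z \<in> X" "{y, z} \<in> E" using step(2) by (auto simp: estep_def)
  have "successively (ed E) (P @ [z])"
    using P e by (simp add: successively_append_iff ed_def)
  moreover have "hd (P @ [z]) = x" using P by simp
  ultimately show ?case using P e by (intro exI[of _ "P @ [z]"]) simp
qed

lemma cycle_generic:
  assumes L: "length cs \<ge> 4" and d: "distinct cs"
    and eprop: "\<And>x y. {x, y} \<in> E \<Longrightarrow> x \<noteq> y"
    and c1: "\<And>i. Suc i < length cs \<Longrightarrow> {cs ! i, cs ! Suc i} \<in> E"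
    and c2: "{cs ! (length cs - 1), cs ! 0} \<in> E"
    and c3: "\<And>i j. i < j \<Longrightarrow> j < length cs \<Longrightarrow> {cs ! i, cs ! j} \<in> E \<Longrightarrow> j = Suc i \<or> (i = 0 \<and> j = length cs - 1)"
  shows "\<forall>i < length cs. \<forall>j < length cs.
        ({cs ! i, cs ! j} \<in> E \<longleftrightarrow> (j = Suc i mod length cs \<or> i = Suc j mod length cs))"
proof (intro allI impI)
  fix i j assume ij: "i < length cs" "j < length cs"
  define n where "n = length cs"
  have modl: "\<And>k. k < n \<Longrightarrow> Suc k mod n = (if Suc k = n then 0 else Suc k)"
    by auto
  have dir: "{cs ! i, cs ! j} \<in> E \<Longrightarrow> (j = Suc i mod n \<or> i = Suc j mod n)" if "i < n" "j < n" for i j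
  proof -
    assume e: "{cs ! i, cs ! j} \<in> E"
    have "cs ! i \<noteq> cs ! j" using eprop[OF e] .
    then have "i \<noteq> j" by auto
    moreover have e': "{cs ! j, cs ! i} \<in> E" using e by (simp add: insert_commute)
    ultimately consider "i < j" | "j < i" by linarith
    then show ?thesis
    proof cases
      case 1
      from c3[OF 1 that(2)[unfolded n_def] e] show ?thesis
        using modl that L unfolding n_def by auto
    next
      case 2
      from c3[OF 2 that(1)[unfolded n_def] e'] show ?thesis
        using modl that L unfolding n_def by auto
    qed
  qed
  have conv: "(j = Suc i mod n \<or> i = Suc j mod n) \<Longrightarrow> {cs ! i, cs ! j} \<in> E" if "i < n" "j < n" for i j
  proof -
    assume h: "j = Suc i mod n \<or> i = Suc j mod n"
    then consider "j = Suc i mod n" | "i = Suc j mod n" by blast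
    then show ?thesis
    proof cases
      case 1
      show ?thesis
      proof (cases "Suc i = n")
        case True
        then have "j = 0" "i = n - 1" using 1 by auto
        then show ?thesis using c2 unfolding n_def by (simp add: insert_commute)
      next
        case False
        then have "j = Suc i" "Suc i < n" using 1 that modl by auto
        then show ?thesis using c1 unfolding n_def by simp
      qed
    next
      case 2
      show ?thesis
      proof (cases "Suc j = n")
        case True
        then have "i = 0" "j = n - 1" using 2 by auto
        then show ?thesis using c2 unfolding n_def by (simp add: insert_commute)
      next
        case False
        then have "i = Suc j" "Suc j < n" using 2 that modl by auto
        then show ?thesis using c1[of j] unfolding n_def by (simp add: insert_commute)
      qed
    qed
  qed
  show "({cs ! i, cs ! j} \<in> E \<longleftrightarrow> (j = Suc i mod length cs \<or> i = Suc j mod length cs))"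
    using dir[of i j] conv[of i j] ij unfolding n_def by blast
qed

lemma edge_props:
  assumes "simple_graph V E" "{x, y} \<in> E"
  shows "x \<noteq> y \<and> x \<in> V \<and> y \<in> V"
proof -
  obtain u v where "{x, y} = {u, v}" "u \<noteq> v" "u \<in> V" "v \<in> V"
    using assms unfolding simple_graph_def by blast
  then show ?thesis by (auto simp: doubleton_eq_iff)
qed

lemma last_take_nth: "0 < n \<Longrightarrow> n \<le> length xs \<Longrightarrow> last (take n xs) = xs ! (n - 1)"
  using take_Suc_conv_app_nth[of "n - 1" xs] by simp

lemma chordless_contra:
  assumes sg: "simple_graph V E" and ch: "chordal V E"
    and XV: "X \<subseteq> V" and aX: "a \<notin> X" and s1X: "s1 \<notin> X" and s2X: "s2 \<notin> X" and s12: "s1 \<noteq> s2"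
    and as1: "{a, s1} \<in> E" and as2: "{a, s2} \<in> E" and ns12: "{s1, s2} \<notin> E"
    and aXn: "\<And>x. x \<in> X \<Longrightarrow> {a, x} \<notin> E"
    and P: "P \<noteq> []" "set P \<subseteq> X" "{s1, hd P} \<in> E" "{last P, s2} \<in> E" "successively (ed E) P"
  shows False
proof -
  define good where "good Q \<longleftrightarrow> Q \<noteq> [] \<and> set Q \<subseteq> X \<and> {s1, hd Q} \<in> E \<and> {last Q, s2} \<in> E \<and> successively (ed E) Q" for Q
  have "good P" using P by (simp add: good_def)
  then obtain Q where gQ: "good Q" and minQ: "\<And>Q'. good Q' \<Longrightarrow> length Q \<le> length Q'"
    using ex_has_least_nat[of good P length] by blast
  define m where "m = length Q"
  have Qne: "Q \<noteq> []" and QX: "set Q \<subseteq> X" and Qs1: "{s1, hd Q} \<in> E" and Qs2: "{last Q, s2} \<in> E"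
    and Qs: "successively (ed E) Q" using gQ by (auto simp: good_def)
  have m1: "m \<ge> 1" using Qne unfolding m_def by (cases Q) auto
  have Qnth: "\<And>k. Suc k < m \<Longrightarrow> {Q ! k, Q ! Suc k} \<in> E"
    using successively_nth[OF Qs] unfolding m_def ed_def by blast
  have QinX: "\<And>k. k < m \<Longrightarrow> Q ! k \<in> X" using QX unfolding m_def by auto
  have M3: "{s1, Q ! j} \<notin> E" if "0 < j" "j < m" for j
  proof
    assume e: "{s1, Q ! j} \<in> E"
    have "good (drop j Q)"
      unfolding good_def using that e Qs2 QX Qs set_drop_subset[of j Q]
      by (auto simp: m_def hd_drop_conv_nth intro: succ_drop)
    from minQ[OF this] show False using that unfolding m_def by simp
  qed
  have M4: "{Q ! i, s2} \<notin> E" if "Suc i < m" for i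
  proof
    assume e: "{Q ! i, s2} \<in> E"
    have l: "last (take (Suc i) Q) = Q ! i"
      using that last_take_nth[of "Suc i" Q] by (simp add: m_def)
    have "good (take (Suc i) Q)"
      unfolding good_def using that e Qs1 QX Qs set_take_subset[of "Suc i" Q] l Qne
      by (auto simp: m_def intro: succ_take)
    from minQ[OF this] show False using that unfolding m_def by simp
  qed
  have M2: "{Q ! i, Q ! j} \<notin> E" if "Suc i < j" "j < m" for i j
  proof
    assume e: "{Q ! i, Q ! j} \<in> E"
    define Q' where "Q' = take (Suc i) Q @ drop j Q"
    have l: "last (take (Suc i) Q) = Q ! i"
      using that last_take_nth[of "Suc i" Q] by (simp add: m_def)
    have h: "hd (drop j Q) = Q ! j" using that by (simp add: hd_drop_conv_nth m_def)
    have "successively (ed E) Q'"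
      unfolding Q'_def successively_append_iff
      using succ_take[OF Qs] succ_drop[OF Qs] l h e by (simp add: ed_def)
    moreover have "set Q' \<subseteq> X" unfolding Q'_def
      using QX set_take_subset[of "Suc i" Q] set_drop_subset[of j Q] by auto
    moreover have "hd Q' = hd Q" unfolding Q'_def using Qne by simp
    moreover have "last Q' = last Q" unfolding Q'_def using that by (simp add: m_def)
    moreover have "Q' \<noteq> []" unfolding Q'_def using Qne by simp
    ultimately have "good Q'" using Qs1 Qs2 by (simp add: good_def)
    from minQ[OF this] show False using that unfolding m_def Q'_def by simp
  qed
  have Mneq: "Q ! i \<noteq> Q ! j" if "i < j" "j < m" for i j
  proof
    assume eq: "Q ! i = Q ! j"
    define Q' where "Q' = take i Q @ drop j Q"
    have h: "hd (drop j Q) = Q ! j" using that by (simp add: hd_drop_conv_nth m_def)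
    have sQ': "successively (ed E) Q'"
    proof (cases "i = 0")
      case True then show ?thesis unfolding Q'_def using succ_drop[OF Qs] by simp
    next
      case False
      have l: "last (take i Q) = Q ! (i - 1)"
        using that False last_take_nth[of i Q] by (simp add: m_def)
      have "{Q ! (i - 1), Q ! i} \<in> E" using Qnth[of "i - 1"] that False by simp
      then show ?thesis
        unfolding Q'_def successively_append_iff
        using succ_take[OF Qs] succ_drop[OF Qs] l h eq False by (simp add: ed_def)
    qed
    have hQ': "hd Q' = hd Q"
    proof (cases "i = 0")
      case True then show ?thesis unfolding Q'_def using h eq Qne by (simp add: hd_conv_nth)
    next
      case False then show ?thesis unfolding Q'_def using Qne by simp
    qed
    have "set Q' \<subseteq> X" unfolding Q'_def
      using QX set_take_subset[of i Q] set_drop_subset[of j Q] by auto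
    moreover have "last Q' = last Q" unfolding Q'_def using that by (simp add: m_def)
    moreover have "Q' \<noteq> []" unfolding Q'_def using that by (simp add: m_def)
    ultimately have "good Q'" using Qs1 Qs2 sQ' hQ' by (simp add: good_def)
    from minQ[OF this] show False using that unfolding m_def Q'_def by simp
  qed
  have dQ: "distinct Q"
    unfolding distinct_conv_nth
  proof (intro allI impI)
    fix i j assume "i < length Q" "j < length Q" "i \<noteq> j"
    then show "Q ! i \<noteq> Q ! j" using Mneq[of i j] Mneq[of j i] unfolding m_def
      by (metis linorder_neqE_nat)
  qed
  define cs where "cs = a # s1 # Q @ [s2]"
  have lcs: "length cs = m + 3" unfolding cs_def m_def by simp
  have cs0: "cs ! 0 = a" and cs1: "cs ! 1 = s1" unfolding cs_def by simp_all
  have csQ: "cs ! Suc (Suc k) = Q ! k" if "k < m" for k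
    unfolding cs_def using that by (simp add: nth_append m_def)
  have csl: "cs ! Suc (Suc m) = s2" unfolding cs_def by (simp add: nth_append m_def)
  have ae: "a \<in> V" "s1 \<in> V" "s2 \<in> V" "a \<noteq> s1" "a \<noteq> s2"
    using edge_props[OF sg as1] edge_props[OF sg as2] by auto
  have eprop: "\<And>x y. {x, y} \<in> E \<Longrightarrow> x \<noteq> y" using edge_props[OF sg] by blast
  have lastQ: "last Q = Q ! (m - 1)" using Qne by (simp add: last_conv_nth m_def)
  have hdQ: "hd Q = Q ! 0" using Qne by (simp add: hd_conv_nth)
  have cyc: "\<forall>i < length cs. \<forall>j < length cs.
        ({cs ! i, cs ! j} \<in> E \<longleftrightarrow> (j = Suc i mod length cs \<or> i = Suc j mod length cs))"
  proof (rule cycle_generic[OF _ _ eprop])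
    show "4 \<le> length cs" using lcs m1 by simp
    have nin: "a \<notin> set Q" "s1 \<notin> set Q" "s2 \<notin> set Q" using QX aX s1X s2X by auto
    show "distinct cs" unfolding cs_def using dQ nin ae s12 by simp
    show "{cs ! i, cs ! Suc i} \<in> E" if "Suc i < length cs" for i
    proof -
      have "i = 0 \<or> i = 1 \<or> (2 \<le> i \<and> i < Suc m) \<or> i = Suc m" using that lcs by linarith
      then consider "i = 0" | "i = 1" | k where "i = Suc (Suc k)" "Suc k < m" | "i = Suc m"
      proof (elim disjE)
        assume a: "2 \<le> i \<and> i < Suc m" and h: "\<And>k. i = Suc (Suc k) \<Longrightarrow> Suc k < m \<Longrightarrow> thesis"
        have "i = Suc (Suc (i - 2))" "Suc (i - 2) < m" using a by arith+
        then show thesis using h by blast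
      qed auto
      then show ?thesis
      proof cases
        case 1 then show ?thesis using cs0 cs1 as1 by simp
      next
        case 2 then show ?thesis using cs1 csQ[of 0] m1 Qs1 hdQ by (simp add: numeral_2_eq_2)
      next
        case 3 then show ?thesis using csQ Qnth by simp
      next
        case 4
        then have i2: "i = Suc (Suc (m - 1))" "Suc i = Suc (Suc m)" using m1 by simp_all
        have "cs ! i = Q ! (m - 1)" using csQ[of "m - 1"] m1 i2(1) by simp
        then show ?thesis using i2(2) csl Qs2 lastQ by simp
      qed
    qed
    show "{cs ! (length cs - 1), cs ! 0} \<in> E"
      using lcs csl cs0 as2 by (simp add: insert_commute numeral_3_eq_3)
    show "j = Suc i \<or> i = 0 \<and> j = length cs - 1"
      if ij: "i < j" "j < length cs" "{cs ! i, cs ! j} \<in> E" for i j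
    proof -
      have "j = 1 \<or> (2 \<le> j \<and> j < Suc (Suc m)) \<or> j = Suc (Suc m)" using ij lcs by linarith
      then have jc: "j = 1 \<or> (\<exists>l. j = Suc (Suc l) \<and> l < m) \<or> j = Suc (Suc m)"
      proof (elim disjE)
        assume a: "2 \<le> j \<and> j < Suc (Suc m)"
        have "j = Suc (Suc (j - 2))" "j - 2 < m" using a by arith+
        then show ?thesis by blast
      qed auto
      have "i = 0 \<or> i = 1 \<or> (2 \<le> i \<and> i < Suc (Suc m))" using ij lcs by linarith
      then consider "i = 0" | "i = 1" | k where "i = Suc (Suc k)" "k < m"
      proof (elim disjE)
        assume a: "2 \<le> i \<and> i < Suc (Suc m)" and h: "\<And>k. i = Suc (Suc k) \<Longrightarrow> k < m \<Longrightarrow> thesis"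
        have "i = Suc (Suc (i - 2))" "i - 2 < m" using a by arith+
        then show thesis using h by blast
      qed auto
      then show ?thesis
      proof cases
        case 1
        show ?thesis
        proof (cases "j = 1 \<or> j = Suc (Suc m)")
          case True then show ?thesis using 1 lcs by auto
        next
          case False
          then obtain l where l: "j = Suc (Suc l)" "l < m" using jc by blast
          then show ?thesis using ij(3) 1 cs0 csQ[OF l(2)] aXn QinX[OF l(2)] by simp
        qed
      next
        case 2
        show ?thesis
        proof (cases "j = Suc (Suc m)")
          case True then show ?thesis using ij(3) 2 cs1 csl ns12 by simp
        next
          case False
          then obtain l where l: "j = Suc (Suc l)" "l < m" using jc ij 2 by auto
          show ?thesis
          proof (cases "l = 0")
            case True then show ?thesis using l 2 by simp
          next
            case False
            then show ?thesis using M3[of l] l ij(3) 2 cs1 csQ[OF l(2)] by simp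
          qed
        qed
      next
        case 3
        show ?thesis
        proof (cases "j = Suc (Suc m)")
          case True
          show ?thesis
          proof (cases "Suc k < m")
            case True2: True
            then show ?thesis using M4[of k] ij(3) 3 True csQ csl by simp
          next
            case False then show ?thesis using 3 True by simp
          qed
        next
          case False
          then obtain l where l: "j = Suc (Suc l)" "l < m" using jc ij 3 by auto
          show ?thesis
          proof (cases "l = Suc k")
            case True then show ?thesis using l 3 by simp
          next
            case False
            then have "Suc k < l" using l 3 ij by simp
            then show ?thesis using M2[of k l] l ij(3) 3 csQ by simp
          qed
        qed
      qed
    qed
  qed
  have "set cs \<subseteq> V" unfolding cs_def using QX XV ae by auto
  moreover have "distinct cs" and "4 \<le> length cs"
  proof -
    have nin: "a \<notin> set Q" "s1 \<notin> set Q" "s2 \<notin> set Q" using QX aX s1X s2X by auto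
    show "distinct cs" unfolding cs_def using dQ nin ae s12 by simp
    show "4 \<le> length cs" using lcs m1 by simp
  qed
  ultimately show False using ch cyc unfolding chordal_def by blast
qed

definition simpl :: "'a set set \<Rightarrow> 'a set \<Rightarrow> 'a \<Rightarrow> bool" where
  "simpl E W v \<longleftrightarrow> (\<forall>x\<in>W. \<forall>y\<in>W. {v, x} \<in> E \<longrightarrow> {v, y} \<in> E \<longrightarrow> x \<noteq> y \<longrightarrow> {x, y} \<in> E)"

lemma dirac_aux:
  assumes sg: "simple_graph V E" and ch: "chordal V E"
  shows "finite W \<Longrightarrow> W \<subseteq> V \<Longrightarrow> a \<in> W \<Longrightarrow> y \<in> W \<Longrightarrow> y \<noteq> a \<Longrightarrow> {a, y} \<notin> E
    \<Longrightarrow> \<exists>v\<in>W. v \<noteq> a \<and> {a, v} \<notin> E \<and> simpl E W v"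
proof (induction "card W" arbitrary: W a y rule: less_induct)
  case less
  define U where "U = {x\<in>W. x \<noteq> a \<and> {a, x} \<notin> E}"
  define C where "C = {z. reach E U y z}"
  define S where "S = {s\<in>W. s \<notin> C \<and> (\<exists>c\<in>C. {c, s} \<in> E)}"
  have yU: "y \<in> U" using less.prems unfolding U_def by simp
  have CU: "C \<subseteq> U" unfolding C_def using yU reach_in by fastforce
  have yC: "y \<in> C" unfolding C_def by (simp add: reach_refl)
  have Cclosed: "q \<in> C" if "p \<in> C" "q \<in> U" "{p, q} \<in> E" for p q
    using that CU reach_step[of E U y p q] unfolding C_def by blast
  have SN: "{a, s} \<in> E \<and> s \<noteq> a" if sS: "s \<in> S" for s
  proof -
    obtain c where c: "c \<in> C" "{c, s} \<in> E" "s \<in> W" "s \<notin> C" using sS unfolding S_def by blast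
    have cU: "c \<noteq> a" "{a, c} \<notin> E" using c(1) CU unfolding U_def by auto
    have "s \<noteq> a" using cU(2) c(2) by (auto simp: insert_commute)
    moreover have "{a, s} \<in> E"
    proof (rule ccontr)
      assume "{a, s} \<notin> E"
      then have "s \<in> U" using c(3) \<open>s \<noteq> a\<close> unfolding U_def by simp
      then show False using Cclosed[OF c(1) _ c(2)] c(4) by simp
    qed
    ultimately show ?thesis by simp
  qed
  have nbr: "x \<in> C \<or> x \<in> S" if "c \<in> C" "x \<in> W" "{c, x} \<in> E" for c x
    using that unfolding S_def by blast
  have UV: "U \<subseteq> V" using less.prems unfolding U_def by auto
  have Sclique: "{s1, s2} \<in> E" if ss: "s1 \<in> S" "s2 \<in> S" "s1 \<noteq> s2" for s1 s2
  proof (rule ccontr)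
    assume ns: "{s1, s2} \<notin> E"
    obtain c1 where c1: "c1 \<in> C" "{c1, s1} \<in> E" using ss(1) unfolding S_def by blast
    obtain c2 where c2: "c2 \<in> C" "{c2, s2} \<in> E" using ss(2) unfolding S_def by blast
    have "reach E U c1 c2"
      using c1(1) c2(1) unfolding C_def by (meson mem_Collect_eq reach_sym reach_trans)
    then have "reach E C c1 c2"
      by (rule reach_restrict[OF _ c1(1) CU]) (rule Cclosed)
    then obtain P where P: "P \<noteq> []" "hd P = c1" "last P = c2" "set P \<subseteq> C" "successively (ed E) P"
      using reach_walk[of E C c1 c2] c1(1) by blast
    show False
    proof (rule chordless_contra[OF sg ch, of C a s1 s2 P])
      show "C \<subseteq> V" using CU UV by blast
      show "a \<notin> C" using CU unfolding U_def by blast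
      show "s1 \<notin> C" "s2 \<notin> C" using ss unfolding S_def by blast+
      show "s1 \<noteq> s2" by fact
      show "{a, s1} \<in> E" "{a, s2} \<in> E" using SN ss by blast+
      show "{s1, s2} \<notin> E" by fact
      show "{a, x} \<notin> E" if "x \<in> C" for x using that CU unfolding U_def by blast
      show "P \<noteq> []" "set P \<subseteq> C" "successively (ed E) P" by fact+
      show "{s1, hd P} \<in> E" using P(2) c1(2) by (simp add: insert_commute)
      show "{last P, s2} \<in> E" using P(3) c2(2) by simp
    qed
  qed
  define W' where "W' = C \<union> S"
  have W'W: "W' \<subseteq> W" unfolding W'_def S_def using CU unfolding U_def by blast
  have aW': "a \<notin> W'" unfolding W'_def using CU SN unfolding U_def by blast
  have cardW': "card W' < card W"
    using W'W aW' less.prems(3) less.prems(1) by (metis psubsetI psubset_card_mono)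
  have finW': "finite W'" using W'W less.prems(1) finite_subset by blast
  have W'V: "W' \<subseteq> V" using W'W less.prems(2) by blast
  have lift: "simpl E W v" if vv: "v \<in> C" "simpl E W' v" for v
    unfolding simpl_def
  proof (intro ballI impI)
    fix x z assume "x \<in> W" "z \<in> W" "{v, x} \<in> E" "{v, z} \<in> E" "x \<noteq> z"
    then have "x \<in> W'" "z \<in> W'" using nbr[OF vv(1)] unfolding W'_def by blast+
    then show "{x, z} \<in> E" using vv(2) \<open>{v, x} \<in> E\<close> \<open>{v, z} \<in> E\<close> \<open>x \<noteq> z\<close>
      unfolding simpl_def by blast
  qed
  have vok: "v \<in> W \<and> v \<noteq> a \<and> {a, v} \<notin> E" if "v \<in> C" for v
    using that CU unfolding U_def by blast
  show ?case
  proof (cases "\<forall>x\<in>W'. \<forall>z\<in>W'. x \<noteq> z \<longrightarrow> {x, z} \<in> E")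
    case True
    have "simpl E W' y" unfolding simpl_def using True by blast
    then show ?thesis using lift[OF yC] vok[OF yC] by blast
  next
    case False
    then obtain x1 x2 where x12: "x1 \<in> W'" "x2 \<in> W'" "x1 \<noteq> x2" "{x1, x2} \<notin> E" by blast
    show ?thesis
    proof (cases "\<exists>b\<in>S. \<exists>z\<in>W'. z \<noteq> b \<and> {b, z} \<notin> E")
      case True
      then obtain b z where bz: "b \<in> S" "z \<in> W'" "z \<noteq> b" "{b, z} \<notin> E" by blast
      have bW': "b \<in> W'" using bz(1) unfolding W'_def by blast
      obtain v where v: "v \<in> W'" "v \<noteq> b" "{b, v} \<notin> E" "simpl E W' v"
        using less.hyps[OF cardW' finW' W'V bW' bz(2) bz(3) bz(4)] by blast
      have "v \<notin> S" using Sclique[OF bz(1) _ v(2)[symmetric]] v(3) by blast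
      then have "v \<in> C" using v(1) unfolding W'_def by blast
      then show ?thesis using lift[OF _ v(4)] vok by blast
    next
      case False
      then have univ: "{b, z} \<in> E" if "b \<in> S" "z \<in> W'" "z \<noteq> b" for b z using that by blast
      have "x1 \<notin> S" using univ[of x1 x2] x12 by auto
      then have x1W': "x1 \<in> W'" using x12 by blast
      obtain v where v: "v \<in> W'" "v \<noteq> x1" "{x1, v} \<notin> E" "simpl E W' v"
        using less.hyps[OF cardW' finW' W'V x1W' x12(2) x12(3)[symmetric] x12(4)] by blast
      have "v \<notin> S" using univ[of v x1] x1W' v(2,3) by (auto simp: insert_commute)
      then have "v \<in> C" using v(1) unfolding W'_def by blast
      then show ?thesis using lift[OF _ v(4)] vok by blast
    qed
  qed
qed

lemma dirac:
  assumes sg: "simple_graph V E" and ch: "chordal V E" and ne: "V \<noteq> {}"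
  shows "\<exists>v\<in>V. simpl E V v"
proof (cases "\<forall>x\<in>V. \<forall>z\<in>V. x \<noteq> z \<longrightarrow> {x, z} \<in> E")
  case True
  then show ?thesis using ne unfolding simpl_def by blast
next
  case False
  then obtain a y where "a \<in> V" "y \<in> V" "a \<noteq> y" "{a, y} \<notin> E" by blast
  then show ?thesis
    using dirac_aux[OF sg ch, of V a y] sg unfolding simple_graph_def by blast
qed

lemma class_same:
  assumes "reach E W x u" shows "{z. reach E W x z} = {z. reach E W u z}"
proof (rule Collect_cong)
  fix z
  show "reach E W x z = reach E W u z"
    using assms reach_sym[OF assms] reach_trans[of E W x u z] reach_trans[of E W u x z] by blast
qed

lemma count_merge:
  assumes fin: "finite W" and uW: "u \<in> W" and wW: "w \<in> W" and vW: "v \<notin> W"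
    and NW: "\<And>x. x \<in> W \<Longrightarrow> {v, x} \<in> E \<Longrightarrow> x = u \<or> x = w"
  shows "omega (E - {{u, w}}) W \<le> omega E (insert v W) + 1"
proof -
  define E1 where "E1 = E - {{u, w}}"
  define W' where "W' = insert v W"
  define Q1 where "Q1 = W // rel E1 W"
  define Q2 where "Q2 = W' // rel E W'"
  define cu where "cu = {z. reach E1 W u z}"
  define cw where "cw = {z. reach E1 W w z}"
  define cv where "cv = {z. reach E W' u z}"
  have finW': "finite W'" using fin unfolding W'_def by simp
  have sub: "insert cv (Q1 - {cu, cw}) \<subseteq> Q2"
  proof -
    have cvQ2: "cv \<in> Q2" unfolding cv_def Q2_def using class_in[of u W' E] uW unfolding W'_def by simp
    have other: "C \<in> Q2 \<and> C \<noteq> cv" if CQ: "C \<in> Q1 - {cu, cw}" for C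
    proof -
      obtain x where x: "x \<in> W" "C = rel E1 W `` {x}" using CQ unfolding Q1_def by (blast elim: quotientE)
      have Cx: "C = {z. reach E1 W x z}" using x class_eq[OF x(1)] by simp
      have nxu: "\<not> reach E1 W x u"
      proof
        assume "reach E1 W x u"
        then have "C = cu" unfolding Cx cu_def by (rule class_same)
        then show False using CQ by simp
      qed
      have nxw: "\<not> reach E1 W x w"
      proof
        assume "reach E1 W x w"
        then have "C = cw" unfolding Cx cw_def by (rule class_same)
        then show False using CQ by simp
      qed
      have eq: "{z. reach E1 W x z} = {z. reach E W' x z}"
      proof
        show "{z. reach E1 W x z} \<subseteq> {z. reach E W' x z}"
          using reach_mono[of E1 W x _ W' E] unfolding W'_def E1_def by blast
        show "{z. reach E W' x z} \<subseteq> {z. reach E1 W x z}"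
        proof
          fix z assume "z \<in> {z. reach E W' x z}"
          then have rz: "reach E W' x z" by simp
          have "z \<in> {z. reach E1 W x z}"
          proof (rule reach_closed[OF rz])
            show "x \<in> {z. reach E1 W x z}" by (simp add: reach_refl)
            fix p q assume p: "p \<in> {z. reach E1 W x z}" and q: "q \<in> W'" and pq: "{p, q} \<in> E"
            have rp: "reach E1 W x p" using p by simp
            have pW: "p \<in> W" using reach_in[OF rp] x(1) by blast
            have pu: "p \<noteq> u" using rp nxu by blast
            have pw: "p \<noteq> w" using rp nxw by blast
            have qv: "q \<noteq> v"
            proof
              assume "q = v"
              then have "{v, p} \<in> E" using pq by (simp add: insert_commute)
              then show False using NW[OF pW] pu pw by blast
            qed
            then have qW: "q \<in> W" using q unfolding W'_def by simp
            have "{p, q} \<noteq> {u, w}" using pu pw by (auto simp: doubleton_eq_iff)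
            then have "{p, q} \<in> E1" using pq unfolding E1_def by simp
            then show "q \<in> {z. reach E1 W x z}" using reach_step[OF rp pW qW] by simp
          qed
          then show "z \<in> {z. reach E1 W x z}" .
        qed
      qed
      have xW': "x \<in> W'" using x(1) unfolding W'_def by simp
      have "C \<in> Q2" unfolding Q2_def Cx eq using class_in[OF xW'] .
      moreover have "C \<noteq> cv"
      proof
        assume "C = cv"
        then have "u \<in> C" unfolding cv_def by (simp add: reach_refl)
        then show False using Cx nxu by simp
      qed
      ultimately show ?thesis by simp
    qed
    show ?thesis using cvQ2 other by blast
  qed
  have cvn: "cv \<notin> Q1 - {cu, cw}"
  proof
    assume "cv \<in> Q1 - {cu, cw}"
    then obtain x where x: "x \<in> W" "cv = rel E1 W `` {x}" "cv \<noteq> cu" unfolding Q1_def by (blast elim: quotientE)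
    have "u \<in> cv" unfolding cv_def by (simp add: reach_refl)
    then have "reach E1 W x u" using x class_eq[OF x(1)] by simp
    then have "rel E1 W `` {x} = cu" using class_eq[OF x(1)] class_same unfolding cu_def by metis
    then show False using x by simp
  qed
  have finQ1: "finite Q1" unfolding Q1_def by (rule classes_finite[OF fin])
  have finQ2: "finite Q2" unfolding Q2_def by (rule classes_finite[OF finW'])
  have "card (insert cv (Q1 - {cu, cw})) \<le> card Q2" by (rule card_mono[OF finQ2 sub])
  moreover have "card (insert cv (Q1 - {cu, cw})) = card (Q1 - {cu, cw}) + 1"
    using cvn finQ1 by simp
  moreover have "card Q1 - card {cu, cw} \<le> card (Q1 - {cu, cw})"
    by (rule diff_card_le_card_Diff) simp
  moreover have "card {cu, cw} \<le> 2" by (simp add: card_insert_if)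
  ultimately have "card Q1 \<le> card Q2 + 1" by linarith
  then show ?thesis unfolding Q1_def Q2_def E1_def W'_def by (simp add: omega_alt)
qed

lemma tough_of:
  assumes "toughness V E = ereal t" "cutset V E S"
  shows "t * real (omega E (V - S)) \<le> real (card S)"
proof -
  define w where "w = omega E (V - S)"
  have w2: "w \<ge> 2" using assms(2) unfolding cutset_def w_def omega_def by simp
  have "Sup {ereal t | t. t \<ge> 0 \<and> tough V E t} \<le> ereal (real (card S) / real w)"
  proof (rule Sup_least)
    fix x assume "x \<in> {ereal t | t. t \<ge> 0 \<and> tough V E t}"
    then obtain t' where t': "x = ereal t'" "tough V E t'" by blast
    then have "t' * real w \<le> real (card S)" using assms(2) unfolding tough_def w_def omega_def by blast
    then have "t' \<le> real (card S) / real w" using w2 by (simp add: pos_le_divide_eq)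
    then show "x \<le> ereal (real (card S) / real w)" using t' by simp
  qed
  then have "t \<le> real (card S) / real w" using assms(1) unfolding toughness_def by simp
  then show ?thesis using w2 unfolding w_def[symmetric] by (simp add: pos_le_divide_eq)
qed

lemma not_tough_of:
  assumes "toughness V E < ereal t" "t \<ge> 0"
  shows "\<not> tough V E t"
proof
  assume "tough V E t"
  then have "ereal t \<in> {ereal t | t. t \<ge> 0 \<and> tough V E t}" using assms(2) by blast
  then have "ereal t \<le> toughness V E" unfolding toughness_def by (rule Sup_upper)
  then show False using assms(1) by simp
qed

lemma cutset_exists:
  assumes "toughness V E = ereal t"
  shows "\<exists>S. cutset V E S"
proof (rule ccontr)
  assume "\<nexists>S. cutset V E S"
  then have "tough V E (\<bar>t\<bar> + 1)" unfolding tough_def by blast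
  then have "ereal (\<bar>t\<bar> + 1) \<in> {ereal t | t. t \<ge> 0 \<and> tough V E t}" by force
  then have "ereal (\<bar>t\<bar> + 1) \<le> toughness V E" unfolding toughness_def by (rule Sup_upper)
  then show False using assms by simp
qed

theorem mainTheorem2:
  fixes V :: "'a set" and E :: "'a set set" and t :: real
  assumes "t \<in> \<rat>" and "1/2 < t" and "t \<le> 1"
    and "simple_graph V E" and "chordal V E"
  shows "\<not> minimally_tough V E t"
proof
  assume mt: "minimally_tough V E t"
  have sg: "simple_graph V E" and ch: "chordal V E" and t2: "1/2 < t" and t1: "t \<le> 1" using assms by auto
  have finV: "finite V" using sg unfolding simple_graph_def by simp
  have tE: "toughness V E = ereal t" and allE: "\<And>e. e \<in> E \<Longrightarrow> toughness V (E - {e}) < ereal t"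
    using mt unfolding minimally_tough_def by auto
  have T: "t * real (omega E (V - S)) \<le> real (card S)" if "S \<subseteq> V" "omega E (V - S) \<ge> 2" for S
    using tough_of[OF tE] that unfolding cutset_def omega_def by simp
  have NT: "\<exists>S. S \<subseteq> V \<and> omega (E - {e}) (V - S) \<ge> 2 \<and> real (card S) < t * real (omega (E - {e}) (V - S))"
    if "e \<in> E" for e
  proof -
    have "\<not> tough V (E - {e}) t" using not_tough_of[OF allE[OF that]] t2 by simp
    then show ?thesis unfolding tough_def cutset_def omega_def by (auto simp: not_le)
  qed
  obtain S0 where S0: "S0 \<subseteq> V" "omega E (V - S0) \<ge> 2"
    using cutset_exists[OF tE] unfolding cutset_def omega_def by blast
  have eprops: "\<And>x y. {x, y} \<in> E \<Longrightarrow> x \<noteq> y \<and> x \<in> V \<and> y \<in> V" using edge_props[OF sg] by blast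
  have T1: False if "u \<in> V" "a \<in> V - {u}" "b \<in> V - {u}" "\<not> reach E (V - {u}) a b" for u a b
  proof -
    have fu: "finite (V - {u})" using finV by simp
    have w2: "omega E (V - {u}) \<ge> 2" using omega_ge2[OF fu that(2) that(3) that(4)] .
    have "t * real (omega E (V - {u})) \<le> real (card {u})" using T[of "{u}"] that(1) w2 by blast
    then have le1: "t * real (omega E (V - {u})) \<le> 1" by simp
    have "real (omega E (V - {u})) \<ge> 2" using w2 by simp
    then have "t * 2 \<le> t * real (omega E (V - {u}))" using t2 by (intro mult_left_mono) auto
    then show False using le1 t2 by linarith
  qed
  have conn: "reach E V x y" if "x \<in> V" "y \<in> V" for x y
  proof (rule ccontr)
    assume "\<not> reach E V x y"
    then have w2: "omega E (V - {}) \<ge> 2" using omega_ge2[OF finV that(1) that(2)] by simp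
    have "t * real (omega E (V - {})) \<le> real (card ({}::'a set))" using T[of "{}"] w2 by blast
    then have le0: "t * real (omega E (V - {})) \<le> 0" by simp
    have "real (omega E (V - {})) \<ge> 2" using w2 by simp
    then have "t * 2 \<le> t * real (omega E (V - {}))" using t2 by (intro mult_left_mono) auto
    then show False using le0 t2 by linarith
  qed
  have noclique: "\<not> (\<forall>x\<in>V. \<forall>y\<in>V. x \<noteq> y \<longrightarrow> {x, y} \<in> E)"
  proof
    assume cl: "\<forall>x\<in>V. \<forall>y\<in>V. x \<noteq> y \<longrightarrow> {x, y} \<in> E"
    have "omega E (V - S0) \<le> 1" by (rule omega_clique) (use cl in blast)
    then show False using S0 by simp
  qed
  then obtain x0 y0 where xy0: "x0 \<in> V" "y0 \<in> V" "x0 \<noteq> y0" "{x0, y0} \<notin> E" by blast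
  then have Vne: "V \<noteq> {}" by blast
  obtain v where vV: "v \<in> V" and vs: "simpl E V v" using dirac[OF sg ch Vne] by blast
  have two: "\<exists>u w. u \<noteq> w \<and> {v, u} \<in> E \<and> {v, w} \<in> E"
  proof (rule ccontr)
    assume "\<not> ?thesis"
    then have one: "\<And>u w. {v, u} \<in> E \<Longrightarrow> {v, w} \<in> E \<Longrightarrow> u = w" by blast
    obtain z where z: "z \<in> V" "z \<noteq> v" using xy0 by blast
    obtain u where uE: "{v, u} \<in> E"
      using reach_first_step[OF conn[OF vV z(1)]] z(2) by auto
    have uV: "u \<in> V" "u \<noteq> v" using eprops[OF uE] by auto
    obtain z' where z': "z' \<in> V" "z' \<noteq> u" "z' \<noteq> v"
    proof (rule ccontr)
      assume "\<not> thesis"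
      with that have "V \<subseteq> {u, v}" by blast
      then have "{x0, y0} = {u, v}" using xy0(1-3) by auto
      then show False using xy0(4) uE by (simp add: insert_commute)
    qed
    have "\<not> reach E (V - {u}) v z'"
    proof
      assume r: "reach E (V - {u}) v z'"
      have "z' \<in> {v}"
      proof (rule reach_closed[OF r])
        show "v \<in> {v}" by simp
        fix p q assume "p \<in> {v}" "q \<in> V - {u}" "{p, q} \<in> E"
        then show "q \<in> {v}" using one[OF uE, of q] by auto
      qed
      then show False using z' by simp
    qed
    then show False using T1[of u v z'] uV vV z' by simp
  qed
  then obtain u w where uw: "u \<noteq> w" "{v, u} \<in> E" "{v, w} \<in> E" by blast
  have uwV: "u \<in> V" "w \<in> V" "u \<noteq> v" "w \<noteq> v" using eprops[OF uw(2)] eprops[OF uw(3)] by auto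
  have uwE: "{u, w} \<in> E" using vs uwV uw unfolding simpl_def by blast
  define e where "e = {u, w}"
  obtain S where S: "S \<subseteq> V" "omega (E - {e}) (V - S) \<ge> 2"
    "real (card S) < t * real (omega (E - {e}) (V - S))"
    using NT[of e] uwE unfolding e_def by blast
  define W where "W = V - S"
  define k where "k = omega (E - {e}) W"
  have finW: "finite W" using finV unfolding W_def by simp
  have finS: "finite S" using finV S(1) finite_subset by blast
  have key: "u \<in> W \<and> w \<in> W \<and> \<not> reach (E - {e}) W u w"
  proof (rule ccontr)
    assume nk: "\<not> (u \<in> W \<and> w \<in> W \<and> \<not> reach (E - {e}) W u w)"
    have eq: "omega (E - {e}) W = omega E W"
    proof (cases "u \<in> W \<and> w \<in> W")
      case False
      have "induced_edges (E - {e}) W = induced_edges E W"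
        unfolding induced_edges_def e_def using False by auto
      then show ?thesis unfolding omega_def by simp
    next
      case True
      then have ruw: "reach (E - {e}) W u w" using nk by simp
      have "reach (E - {e}) W = reach E W"
      proof (intro ext iffI)
        fix x y
        show "reach (E - {e}) W x y \<Longrightarrow> reach E W x y" by (rule reach_mono) auto
        assume "reach E W x y"
        then show "reach (E - {e}) W x y"
          unfolding reach_def
        proof (induction rule: rtranclp_induct)
          case base then show ?case by simp
        next
          case (step y z)
          have yz: "y \<in> W" "z \<in> W" "{y, z} \<in> E" using step(2) by (auto simp: estep_def)
          show ?case
          proof (cases "{y, z} = e")
            case True
            then have "(y = u \<and> z = w) \<or> (y = w \<and> z = u)" unfolding e_def by (auto simp: doubleton_eq_iff)
            then have "reach (E - {e}) W y z" using ruw reach_sym[OF ruw] by (elim disjE) simp_all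
            then show ?thesis using step.IH unfolding reach_def by simp
          next
            case False
            then have "estep (E - {e}) W y z" using yz by (simp add: estep_def)
            then show ?thesis using step.IH by simp
          qed
        qed
      qed
      then show ?thesis by (rule omega_cong)
    qed
    then have "t * real (omega E W) \<le> real (card S)" using T[OF S(1)] S(2) unfolding W_def by simp
    then show False using S(3) eq unfolding W_def by simp
  qed
  have uW: "u \<in> W" and wW: "w \<in> W" and nruw: "\<not> reach (E - {e}) W u w" using key by auto
  have ue: "{u, v} \<in> E - {e}" "{v, w} \<in> E - {e}"
    using uw uwV unfolding e_def by (auto simp: insert_commute doubleton_eq_iff)
  have vS: "v \<notin> W"
  proof
    assume "v \<in> W"
    then have "reach (E - {e}) W u v" "reach (E - {e}) W v w"
      using reach_edge[OF uW _ ue(1)] reach_edge[OF _ wW ue(2)] by auto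
    then show False using nruw reach_trans[of "E - {e}" W u v w] by simp
  qed
  have NW: "x = u \<or> x = w" if "x \<in> W" "{v, x} \<in> E" for x
  proof (rule ccontr)
    assume nx: "\<not> (x = u \<or> x = w)"
    have xV: "x \<in> V" using that(1) unfolding W_def by simp
    have "{u, x} \<in> E" "{x, w} \<in> E" using vs uwV xV that(2) uw nx unfolding simpl_def
      by (auto simp: insert_commute)
    then have "{u, x} \<in> E - {e}" "{x, w} \<in> E - {e}" using nx unfolding e_def by (auto simp: doubleton_eq_iff)
    then have "reach (E - {e}) W u x" "reach (E - {e}) W x w"
      using reach_edge[OF uW that(1)] reach_edge[OF that(1) wW] by auto
    then show False using nruw reach_trans[of "E - {e}" W u x w] by simp
  qed
  have vInS: "v \<in> S" using vS vV unfolding W_def by simp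
  have k2: "k \<ge> 2" and cS: "real (card S) < t * real k" using S unfolding k_def W_def by auto
  show False
  proof (cases "k \<ge> 3")
    case True
    have cm: "k \<le> omega E (insert v W) + 1"
      using count_merge[OF finW uW wW vS NW] unfolding k_def e_def by simp
    have VS': "V - (S - {v}) = insert v W" using vInS vV unfolding W_def by auto
    have "omega E (V - (S - {v})) \<ge> 2" using cm True VS' by simp
    then have "t * real (omega E (V - (S - {v}))) \<le> real (card (S - {v}))"
      using T[of "S - {v}"] S(1) by auto
    moreover have "card (S - {v}) = card S - 1" using vInS finS by simp
    moreover have "card S \<ge> 1" using vInS finS card_gt_0_iff[of S] by auto
    ultimately have "t * real (omega E (insert v W)) \<le> real (card S) - 1" using VS' by simp
    moreover have "t * (real k - 1) \<le> t * real (omega E (insert v W))"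
      using cm t2 by (intro mult_left_mono) auto
    ultimately have "t * real k - t \<le> real (card S) - 1" by (simp add: algebra_simps)
    then show False using cS t1 by simp
  next
    case False
    then have k2': "k = 2" using k2 by simp
    have "real (card S) < 2" using cS k2' t1 by simp
    then have "card S \<le> 1" by simp
    moreover have "card (S - {v}) = card S - 1" using vInS finS by simp
    ultimately have "card (S - {v}) = 0" by simp
    then have "S - {v} = {}" using finS by simp
    then have Sv: "S = {v}" using vInS by blast
    have WV: "W = V - {v}" unfolding W_def Sv by simp
    have NV: "x = u \<or> x = w" if "{v, x} \<in> E" for x
    proof -
      have "x \<in> V" "x \<noteq> v" using eprops[OF that] by auto
      then show ?thesis using NW[of x] that unfolding WV by simp
    qed
    have side: False if p12: "{p1, p2} = {u, w}" "p1 \<noteq> p2" and a: "a \<in> W" "a \<noteq> p1" "reach (E - {e}) W p1 a" for p1 p2 a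
    proof -
      have p1W: "p1 \<in> W" and p1V: "p1 \<in> V" and p1v: "p1 \<noteq> v" using p12 uW wW uwV by (auto simp: doubleton_eq_iff)
      have np: "\<not> reach (E - {e}) W p1 p2"
      proof
        assume r: "reach (E - {e}) W p1 p2"
        have "(p1 = u \<and> p2 = w) \<or> (p1 = w \<and> p2 = u)" using p12 by (auto simp: doubleton_eq_iff)
        then show False using r reach_sym[OF r] nruw by (elim disjE) simp_all
      qed
      define X where "X = {z. reach (E - {e}) W p1 z \<and> z \<noteq> p1}"
      have "\<not> reach E (V - {p1}) a v"
      proof
        assume r: "reach E (V - {p1}) a v"
        have "v \<in> X"
        proof (rule reach_closed[OF r])
          show "a \<in> X" using a unfolding X_def by simp
          fix p q assume pX: "p \<in> X" and q: "q \<in> V - {p1}" and pq: "{p, q} \<in> E"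
          have rp: "reach (E - {e}) W p1 p" and pp1: "p \<noteq> p1" using pX unfolding X_def by auto
          have pW: "p \<in> W" using reach_in[OF rp] pp1 by blast
          have pp2: "p \<noteq> p2" using rp np by blast
          have "q \<noteq> v"
          proof
            assume "q = v"
            then have "{v, p} \<in> E" using pq by (simp add: insert_commute)
            then have "p = u \<or> p = w" by (rule NV)
            then show False using pp1 pp2 p12 by (auto simp: doubleton_eq_iff)
          qed
          then have qW: "q \<in> W" using q unfolding WV by simp
          have "{p, q} \<noteq> e" using pp1 pp2 p12 unfolding e_def by (auto simp: doubleton_eq_iff)
          then have "{p, q} \<in> E - {e}" using pq by simp
          then have "reach (E - {e}) W p1 q" by (rule reach_step[OF rp pW qW])
          moreover have "q \<noteq> p1" using q by simp
          ultimately show "q \<in> X" unfolding X_def by simp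
        qed
        then have "reach (E - {e}) W p1 v" "v \<noteq> p1" unfolding X_def by auto
        then show False using vS reach_in[of "E - {e}" W p1 v] by simp
      qed
      moreover have "a \<in> V - {p1}" using a unfolding WV by simp
      moreover have "v \<in> V - {p1}" using vV p1v by simp
      ultimately show False using T1[OF p1V] by blast
    qed
    have WUW: "W \<subseteq> {u, w}"
    proof
      fix a assume aW: "a \<in> W"
      show "a \<in> {u, w}"
      proof (rule ccontr)
        assume "a \<notin> {u, w}"
        then have an: "a \<noteq> u" "a \<noteq> w" by auto
        have "\<not> reach (E - {e}) W u a" using side[of u w a] uw(1) aW an by blast
        moreover have "\<not> reach (E - {e}) W w a" using side[of w u a] uw(1) aW an by (auto simp: insert_commute)
        ultimately have "omega (E - {e}) W \<ge> 3"
          using omega_ge3[OF finW uW wW aW nruw] by blast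
        then show False using k2' unfolding k_def by simp
      qed
    qed
    have "V \<subseteq> {u, v, w}" using WUW unfolding WV by blast
    then have "\<forall>x\<in>V. \<forall>y\<in>V. x \<noteq> y \<longrightarrow> {x, y} \<in> E"
    proof (intro ballI impI)
      fix x y assume "V \<subseteq> {u, v, w}" "x \<in> V" "y \<in> V" "x \<noteq> y"
      then have "x \<in> {u, v, w}" "y \<in> {u, v, w}" by auto
      then show "{x, y} \<in> E" using \<open>x \<noteq> y\<close> uw uwE
        by (auto simp: insert_commute)
    qed
    then show False using noclique by blast
  qed
qed

end
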